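(* Let $\rho<0$ and $\gamma>0$. Let $X$ and $Y$ be nonnegative random variables, where the support of $X$ has upper endpoint $\beta(\infty)>0$. Let $\alpha\in RV_\rho$ and $a\in RV_\gamma$ be positive functions such that $t\,\mathbb P[Y/a(t)>y]\to y^{-1/\gamma}$ for every $y>0$, and suppose there is a non-null Radon measure $\mu$ on $[0,\infty]\times(0,\infty]$ with $$t\,\mathbb P\left[\left(\frac{\beta(\infty)-X}{\alpha(t)},\frac{Y}{a(t)}\right)\in\cdot\right]\xrightarrow{\ \mathrm v\ }\mu(\cdot)\quad\text{in } M_+([0,\infty]\times(0,\infty]),$$ and such that for each $y>0$, $x\mapsto\mu([0,x]\times(y,\infty])$ is a nondegenerate distribution function. Then $XY$ has a regularly varying tail of index $-1/\gamma$, and for all $z>0$, $$t\,\mathbb P\left[\frac{XY}{a(t)}>z\right]\to z^{-1/\gamma}\beta(\infty)^{1/\gamma}\quad\text{as } t\to\infty.$$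
   Context: $RV_c$ denotes the class of positive measurable functions $f$ with $f(tx)/f(x)\to t^c$ as $x\to\infty$ for all $t>0$; a random variable $W$ has a regularly varying tail of index $-c$ if $\mathbb P[W>\cdot]\in RV_{-c}$. Vague convergence in $M_+(\mathsf S)$ means convergence on relatively compact continuity sets of the limit. *)

theory Defs
  imports "HOL-Probability.Probability"
begin

definition regvar :: "real \<Rightarrow> (real \<Rightarrow> real) \<Rightarrow> bool" where
  "regvar c f \<longleftrightarrow>
     f \<in> borel_measurable (restrict_space borel {0<..}) \<and>
     (\<forall>x>0. f x > 0) \<and>
     (\<forall>t>0. ((\<lambda>x. f (t * x) / f x) \<longlongrightarrow> t powr c) at_top)"

definition Espace :: "(ereal \<times> ereal) set" where
  "Espace = {0..\<infinity>} \<times> {0<..\<infinity>}"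

definition upper_endpoint :: "'a measure \<Rightarrow> ('a \<Rightarrow> real) \<Rightarrow> real \<Rightarrow> bool" where
  "upper_endpoint M X b \<longleftrightarrow>
     measure M {\<omega>\<in>space M. X \<omega> \<le> b} = 1 \<and>
     (\<forall>x<b. measure M {\<omega>\<in>space M. X \<omega> \<le> x} < 1)"

definition radon_on_E :: "(ereal \<times> ereal) measure \<Rightarrow> bool" where
  "radon_on_E \<mu> \<longleftrightarrow>
     sets \<mu> = sets (restrict_space borel Espace) \<and>
     (\<forall>K. compactin (top_of_set Espace) K \<longrightarrow> emeasure \<mu> K < \<infinity>)"

definition vague_conv_E ::
    "(real \<Rightarrow> (ereal \<times> ereal) set \<Rightarrow> real) \<Rightarrow> (ereal \<times> ereal) measure \<Rightarrow> bool" where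
  "vague_conv_E \<nu> \<mu> \<longleftrightarrow>
     (\<forall>A\<in>sets \<mu>.
        compactin (top_of_set Espace) ((top_of_set Espace) closure_of A) \<longrightarrow>
        emeasure \<mu> ((top_of_set Espace) frontier_of A) = 0 \<longrightarrow>
        ((\<lambda>t. \<nu> t A) \<longlongrightarrow> measure \<mu> A) at_top)"

text \<open>F (on [0,infinity)) is a nondegenerate distribution function with total mass L:
  nondecreasing, right-continuous, F(x) -> L as x -> infinity, and not the
  distribution function of a point mass (nor of the zero measure).\<close>
definition nondeg_df :: "(real \<Rightarrow> real) \<Rightarrow> real \<Rightarrow> bool" where
  "nondeg_df F L \<longleftrightarrow>
     mono_on {0..} F \<and> (\<forall>x\<ge>0. continuous (at_right x) F) \<and>
     (F \<longlongrightarrow> L) at_top \<and>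
     (\<exists>x\<ge>0. 0 < F x \<and> F x < L)"

end

theory Submission
  imports Defs
begin

lemma compact_ereal_Icc: "compact {a..b::ereal}"
  using compact_Int_closed[OF compact_UNIV closed_atLeastAtMost[of a b]] by simp

lemma frontier_sub:
  assumes "closed R" "R \<subseteq> Espace" "open U" "U \<inter> Espace \<subseteq> R"
  shows "(top_of_set Espace) frontier_of R \<subseteq> R - U"
proof -
  have "closedin (top_of_set Espace) R"
    using assms(1,2) closedin_closed by blast
  then have c: "(top_of_set Espace) closure_of R = R" by (rule closure_of_closedin)
  have "openin (top_of_set Espace) (U \<inter> Espace)"
    using assms(3) openin_open by blast
  then have "U \<inter> Espace \<subseteq> (top_of_set Espace) interior_of R"
    using assms(4) interior_of_maximal by blast
  then show ?thesis unfolding frontier_of_def c using assms(2) by blast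
qed

lemma vague_apply:
  assumes V: "vague_conv_E \<nu> \<mu>" and Rad: "radon_on_E \<mu>"
    and R: "closed R" "compact R" "R \<subseteq> Espace" and U: "open U" "U \<inter> Espace \<subseteq> R"
    and S: "S \<in> sets \<mu>" "R - U \<subseteq> S" "emeasure \<mu> S = 0"
  shows "((\<lambda>t. \<nu> t R) \<longlongrightarrow> measure \<mu> R) at_top"
proof -
  have sets: "sets \<mu> = sets (restrict_space borel Espace)" using Rad unfolding radon_on_E_def by blast
  have "R \<in> sets \<mu>" unfolding sets sets_restrict_space
    using R(3) borel_closed[OF R(1)] by (auto intro!: image_eqI[where x=R])
  moreover have "compactin (top_of_set Espace) ((top_of_set Espace) closure_of R)"
  proof -
    have "closedin (top_of_set Espace) R" using R(1,3) closedin_closed by blast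
    then show ?thesis using R by (simp add: closure_of_closedin compactin_subtopology)
  qed
  moreover have "emeasure \<mu> ((top_of_set Espace) frontier_of R) = 0"
  proof -
    have "(top_of_set Espace) frontier_of R \<subseteq> S" using frontier_sub[OF R(1,3) U] S(2) by blast
    then show ?thesis using emeasure_mono[OF _ S(1)] S(3) by (metis le_zero_eq)
  qed
  ultimately show ?thesis using V unfolding vague_conv_E_def by blast
qed

lemma radon_finite:
  assumes Rad: "radon_on_E \<mu>" and "compact K" "K \<subseteq> Espace"
  shows "emeasure \<mu> K < \<infinity>"
  using assms unfolding radon_on_E_def by (simp add: compactin_subtopology)

lemma countable_nonnull:
  fixes S :: "real \<Rightarrow> 'b set"
  assumes fin: "emeasure \<mu> C < \<infinity>" and C: "C \<in> sets \<mu>"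
    and sub: "\<And>r. S r \<subseteq> C" and meas: "\<And>r. S r \<in> sets \<mu>"
    and disj: "\<And>r s. r \<noteq> s \<Longrightarrow> S r \<inter> S s = {}"
  shows "countable {r. emeasure \<mu> (S r) \<noteq> 0}"
proof -
  let ?m = "\<lambda>r. measure \<mu> (S r)"
  have finS: "emeasure \<mu> (S r) \<noteq> \<infinity>" for r
  proof -
    have "emeasure \<mu> (S r) \<le> emeasure \<mu> C" by (rule emeasure_mono[OF sub C])
    then have "emeasure \<mu> (S r) < \<infinity>" using fin by (rule le_less_trans)
    then show ?thesis by simp
  qed
  have eq: "{r. emeasure \<mu> (S r) \<noteq> 0} = (\<Union>n. {r. 1 / Suc n < ?m r})"
  proof safe
    fix r assume "emeasure \<mu> (S r) \<noteq> 0"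
    moreover have "emeasure \<mu> (S r) = ennreal (?m r)"
      using finS[of r] by (simp add: emeasure_eq_ennreal_measure)
    ultimately have "?m r \<noteq> 0" by auto
    then have "?m r > 0" using measure_nonneg[of \<mu> "S r"] by linarith
    then obtain n where "1 / Suc n < ?m r"
      by (rule nat_approx_posE)
    then show "r \<in> (\<Union>n. {r. 1 / Suc n < ?m r})" by blast
  next
    fix r n assume "1 / Suc n < ?m r" "emeasure \<mu> (S r) = 0"
    then show False by (simp add: measure_def)
  qed
  have "finite {r. 1 / Suc n < ?m r}" for n
  proof (rule ccontr)
    assume "infinite {r. 1 / Suc n < ?m r}"
    then obtain X where X: "finite X" "card X = Suc n * (nat (ceiling (measure \<mu> C)) + 1)"
        "X \<subseteq> {r. 1 / Suc n < ?m r}"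
      by (meson infinite_arbitrarily_large)
    have "(\<Sum>r\<in>X. 1 / real (Suc n)) \<le> (\<Sum>r\<in>X. ?m r)"
    proof (rule sum_mono)
      fix r assume "r \<in> X" then show "1 / real (Suc n) \<le> ?m r" using X(3) by force
    qed
    moreover have "(\<Sum>r\<in>X. 1 / real (Suc n)) = real (card X) / Suc n" by simp
    moreover have "(\<Sum>r\<in>X. ?m r) = measure \<mu> (\<Union>r\<in>X. S r)"
    proof (rule measure_finite_Union[symmetric])
      show "finite X" by (rule X(1))
      show "S ` X \<subseteq> sets \<mu>" using meas by blast
      show "disjoint_family_on S X" unfolding disjoint_family_on_def using disj by blast
      show "\<And>i. i \<in> X \<Longrightarrow> emeasure \<mu> (S i) \<noteq> \<infinity>" using finS by blast
    qed
    moreover have "measure \<mu> (\<Union>r\<in>X. S r) \<le> measure \<mu> C"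
    proof (rule measure_mono_fmeasurable)
      show "(\<Union>r\<in>X. S r) \<subseteq> C" using sub by blast
      show "(\<Union>r\<in>X. S r) \<in> sets \<mu>" using X(1) meas by blast
      show "C \<in> fmeasurable \<mu>" using fin C by (simp add: fmeasurable_def)
    qed
    ultimately have le: "real (card X) / Suc n \<le> measure \<mu> C" by linarith
    have cX: "real (card X) = real (Suc n) * real (nat (ceiling (measure \<mu> C)) + 1)"
      using X(2) by (metis of_nat_mult)
    have "real (card X) / Suc n = real (nat (ceiling (measure \<mu> C)) + 1)"
      by (simp only: cX) (rule nonzero_mult_div_cancel_left, simp)
    moreover have "measure \<mu> C \<le> real (nat (ceiling (measure \<mu> C)))"
      by linarith
    ultimately show False using le by linarith
  qed
  then show ?thesis unfolding eq by (intro countable_UN) (auto intro: countable_finite)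
qed

lemma exists_null_in:
  fixes S :: "real \<Rightarrow> 'b set"
  assumes "countable {r. emeasure \<mu> (S r) \<noteq> 0}" "c < d"
  shows "\<exists>r. c < r \<and> r < d \<and> emeasure \<mu> (S r) = 0"
proof (rule ccontr)
  assume "\<not> ?thesis"
  then have "{c<..<d} \<subseteq> {r. emeasure \<mu> (S r) \<noteq> 0}" by auto
  then have "countable {c<..<d}" using assms(1) countable_subset by blast
  then show False using uncountable_open_interval assms(2) by blast
qed

lemma borel_Times_ereal:
  fixes A B :: "ereal set"
  assumes "A \<in> sets borel" "B \<in> sets borel"
  shows "A \<times> B \<in> sets (borel :: (ereal \<times> ereal) measure)"
proof -
  have "A \<times> B \<in> sets (borel \<Otimes>\<^sub>M borel)" by (rule pair_measureI[OF assms])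
  then show ?thesis unfolding borel_prod .
qed

locale T511 = prob_space M
  for M :: "'a measure" +
  fixes X Y :: "'a \<Rightarrow> real"
    and \<rho> \<gamma> b :: real and \<alpha> a :: "real \<Rightarrow> real"
    and \<mu> :: "(ereal \<times> ereal) measure"
  assumes rho: "\<rho> < 0" and gam: "\<gamma> > 0"
    and Xm[measurable]: "X \<in> borel_measurable M" and Ym[measurable]: "Y \<in> borel_measurable M"
    and Xnn: "\<forall>\<omega>\<in>space M. X \<omega> \<ge> 0" and Ynn: "\<forall>\<omega>\<in>space M. Y \<omega> \<ge> 0"
    and ue: "upper_endpoint M X b" and bpos: "b > 0"
    and rva: "regvar \<rho> \<alpha>" and rvA: "regvar \<gamma> a"
    and Ylim: "\<forall>y>0. ((\<lambda>t. t * measure M {\<omega>\<in>space M. Y \<omega> / a t > y})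
                 \<longlongrightarrow> y powr (-1/\<gamma>)) at_top"
    and rad: "radon_on_E \<mu>" and nonnull: "emeasure \<mu> Espace \<noteq> 0"
    and vag: "vague_conv_E
           (\<lambda>t A. t * measure M {\<omega>\<in>space M.
                     (ereal ((b - X \<omega>) / \<alpha> t), ereal (Y \<omega> / a t)) \<in> A}) \<mu>"
    and nd: "\<forall>y>0. nondeg_df (\<lambda>x. measure \<mu> ({0..ereal x} \<times> {ereal y<..\<infinity>}))
                         (measure \<mu> ({0..\<infinity>} \<times> {ereal y<..\<infinity>}))"
begin

definition "\<nu> t A = t * measure M {\<omega>\<in>space M.
                     (ereal ((b - X \<omega>) / \<alpha> t), ereal (Y \<omega> / a t)) \<in> A}"

lemma vag': "vague_conv_E \<nu> \<mu>"
  using vag unfolding \<nu>_def[abs_def] .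

lemma alpha_pos: "t > 0 \<Longrightarrow> \<alpha> t > 0"
  using rva unfolding regvar_def by blast
lemma a_pos: "t > 0 \<Longrightarrow> a t > 0"
  using rvA unfolding regvar_def by blast

lemma X_le_b: "measure M {\<omega>\<in>space M. X \<omega> > b} = 0"
proof -
  have "prob {\<omega>\<in>space M. X \<omega> \<le> b} = 1" using ue unfolding upper_endpoint_def by blast
  moreover have "prob {\<omega>\<in>space M. X \<omega> > b} = 1 - prob {\<omega>\<in>space M. X \<omega> \<le> b}"
  proof -
    have "space M - {\<omega>\<in>space M. X \<omega> \<le> b} = {\<omega>\<in>space M. X \<omega> > b}" by auto
    moreover have "{\<omega>\<in>space M. X \<omega> \<le> b} \<in> events" by measurable
    ultimately show ?thesis using prob_compl[of "{\<omega>\<in>space M. X \<omega> \<le> b}"] by simp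
  qed
  ultimately show ?thesis by simp
qed

lemma sets_mu: "sets \<mu> = sets (restrict_space borel Espace)"
  using rad unfolding radon_on_E_def by blast

lemma in_sets_mu: "A \<in> sets borel \<Longrightarrow> A \<subseteq> Espace \<Longrightarrow> A \<in> sets \<mu>"
  unfolding sets_mu sets_restrict_space by (auto intro!: image_eqI[where x=A])

lemma Espace_iff: "(p, q) \<in> Espace \<longleftrightarrow> 0 \<le> p \<and> 0 < q"
  unfolding Espace_def by auto

lemma Espace_sub: "c > 0 \<Longrightarrow> {0..(\<infinity>::ereal)} \<times> {ereal c..\<infinity>} \<subseteq> Espace"
proof
  fix p assume "c > 0" "p \<in> {0..(\<infinity>::ereal)} \<times> {ereal c..\<infinity>}"
  then have "0 \<le> fst p" "ereal c \<le> snd p" "0 < ereal c" by auto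
  then have "0 < snd p" using less_le_trans by blast
  then show "p \<in> Espace" unfolding Espace_def using \<open>0 \<le> fst p\<close> by (simp add: mem_Times_iff)
qed

lemma fin_mu: "y > 0 \<Longrightarrow> emeasure \<mu> ({0..\<infinity>} \<times> {ereal y..\<infinity>}) < \<infinity>"
  by (rule radon_finite[OF rad]) (auto intro!: compact_Times compact_ereal_Icc Espace_sub)

lemma fin_mu_sub: "y > 0 \<Longrightarrow> A \<subseteq> {0..\<infinity>} \<times> {ereal y..\<infinity>} \<Longrightarrow> emeasure \<mu> A < \<infinity>"
proof -
  assume "y > 0" "A \<subseteq> {0..\<infinity>} \<times> {ereal y..\<infinity>}"
  moreover have "{0..\<infinity>} \<times> {ereal y..\<infinity>} \<in> sets \<mu>"
    using \<open>y > 0\<close> by (intro in_sets_mu borel_Times_ereal Espace_sub) auto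
  ultimately have "emeasure \<mu> A \<le> emeasure \<mu> ({0..\<infinity>} \<times> {ereal y..\<infinity>})"
    by (intro emeasure_mono)
  then show ?thesis using fin_mu[OF \<open>y > 0\<close>] by (rule le_less_trans)
qed

lemma hslice: assumes "0 < c" "c \<le> p" "p < q"
  shows "\<exists>y. p < y \<and> y < q \<and> emeasure \<mu> ({0..\<infinity>} \<times> {ereal y}) = 0"
proof -
  let ?S = "\<lambda>r. {0..\<infinity>} \<times> ({ereal c..\<infinity>} \<inter> {ereal r})"
  have "countable {r. emeasure \<mu> (?S r) \<noteq> 0}"
  proof (rule countable_nonnull)
    show "emeasure \<mu> ({0..\<infinity>} \<times> {ereal c..\<infinity>}) < \<infinity>" using fin_mu assms by simp
    show "{0..\<infinity>} \<times> {ereal c..\<infinity>} \<in> sets \<mu>"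
      using assms by (intro in_sets_mu borel_Times_ereal Espace_sub) auto
    show "?S r \<subseteq> {0..\<infinity>} \<times> {ereal c..\<infinity>}" for r by auto
    show "?S r \<in> sets \<mu>" for r
      using assms Espace_sub[of c] by (intro in_sets_mu borel_Times_ereal) auto
    show "r \<noteq> s \<Longrightarrow> ?S r \<inter> ?S s = {}" for r s by auto
  qed
  then obtain y where y: "p < y" "y < q" "emeasure \<mu> (?S y) = 0"
    using exists_null_in[of \<mu> ?S p q] assms by blast
  moreover have "?S y = {0..\<infinity>} \<times> {ereal y}" using y assms by auto
  ultimately show ?thesis by metis
qed

lemma vslice: assumes "0 < y0" "0 \<le> p" "p < q"
  shows "\<exists>x. p < x \<and> x < q \<and> emeasure \<mu> ({ereal x} \<times> {ereal y0..\<infinity>}) = 0"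
proof -
  let ?S = "\<lambda>r. ({0..\<infinity>} \<inter> {ereal r}) \<times> {ereal y0..\<infinity>}"
  have "countable {r. emeasure \<mu> (?S r) \<noteq> 0}"
  proof (rule countable_nonnull)
    show "emeasure \<mu> ({0..\<infinity>} \<times> {ereal y0..\<infinity>}) < \<infinity>" using fin_mu assms by simp
    show "{0..\<infinity>} \<times> {ereal y0..\<infinity>} \<in> sets \<mu>"
      using assms by (intro in_sets_mu borel_Times_ereal Espace_sub) auto
    show "?S r \<subseteq> {0..\<infinity>} \<times> {ereal y0..\<infinity>}" for r by auto
    show "?S r \<in> sets \<mu>" for r
      using assms Espace_sub[of y0] by (intro in_sets_mu borel_Times_ereal) auto
    show "r \<noteq> s \<Longrightarrow> ?S r \<inter> ?S s = {}" for r s by auto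
  qed
  then obtain x where x: "p < x" "x < q" "emeasure \<mu> (?S x) = 0"
    using exists_null_in[of \<mu> ?S p q] assms by blast
  moreover have "?S x = {ereal x} \<times> {ereal y0..\<infinity>}" using x assms by auto
  ultimately show ?thesis by metis
qed

end

context T511 begin

lemma ereal_le_tr: "0 \<le> K \<Longrightarrow> ereal K \<le> q \<Longrightarrow> 0 \<le> q"
  using order_trans[of 0 "ereal K" q] by simp
lemma ereal_less_tr: "0 \<le> K \<Longrightarrow> ereal K < q \<Longrightarrow> 0 \<le> q"
  using order_trans[of 0 "ereal K" q] by simp

lemma sets_mu_rect: "A \<in> sets borel \<Longrightarrow> B \<in> sets borel \<Longrightarrow> y > 0 \<Longrightarrow> A \<subseteq> {0..\<infinity>} \<Longrightarrow> B \<subseteq> {ereal y..\<infinity>}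
   \<Longrightarrow> A \<times> B \<in> sets \<mu>"
  by (rule in_sets_mu[OF borel_Times_ereal]) (use Espace_sub[of y] in auto)

lemma null_union: "S1 \<in> sets \<mu> \<Longrightarrow> S2 \<in> sets \<mu> \<Longrightarrow> emeasure \<mu> S1 = 0 \<Longrightarrow> emeasure \<mu> S2 = 0
  \<Longrightarrow> emeasure \<mu> (S1 \<union> S2) = 0"
  using emeasure_subadditive[of S1 \<mu> S2] by simp

lemma vague_upper:
  assumes K: "K > 0" and y: "y > 0" and n1: "emeasure \<mu> ({ereal K} \<times> {ereal y..\<infinity>}) = 0"
    and n2: "emeasure \<mu> ({0..\<infinity>} \<times> {ereal y}) = 0"
  shows "((\<lambda>t. \<nu> t ({ereal K..\<infinity>} \<times> {ereal y..\<infinity>})) \<longlongrightarrow> measure \<mu> ({ereal K..\<infinity>} \<times> {ereal y..\<infinity>})) at_top"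
proof (rule vague_apply[OF vag' rad])
  let ?R = "{ereal K..\<infinity>} \<times> {ereal y..\<infinity>}"
  show "closed ?R" by (intro closed_Times closed_atLeastAtMost)
  show "compact ?R" by (intro compact_Times compact_ereal_Icc)
  have "{ereal K..\<infinity>} \<subseteq> {0..\<infinity>}" using K ereal_le_tr[of K] by auto
  then have "?R \<subseteq> {0..\<infinity>} \<times> {ereal y..\<infinity>}" by (intro Sigma_mono) auto
  then show "?R \<subseteq> Espace" using Espace_sub[OF y] by blast
  show "open ({ereal K<..} \<times> {ereal y<..})" by (intro open_Times open_greaterThan)
  show "{ereal K<..} \<times> {ereal y<..} \<inter> Espace \<subseteq> ?R" by auto
  show "{ereal K} \<times> {ereal y..\<infinity>} \<union> {0..\<infinity>} \<times> {ereal y} \<in> sets \<mu>"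
    using K y by (intro sets.Un sets_mu_rect[where y=y]) auto
  show "?R - {ereal K<..} \<times> {ereal y<..} \<subseteq> {ereal K} \<times> {ereal y..\<infinity>} \<union> {0..\<infinity>} \<times> {ereal y}"
    using K by (auto simp: less_le order_trans[of 0 "ereal K"])
  show "emeasure \<mu> ({ereal K} \<times> {ereal y..\<infinity>} \<union> {0..\<infinity>} \<times> {ereal y}) = 0"
    using K y n1 n2 by (intro null_union sets_mu_rect[where y=y]) auto
qed

lemma vague_lower:
  assumes x: "x > 0" and y: "y > 0" and n1: "emeasure \<mu> ({ereal x} \<times> {ereal y..\<infinity>}) = 0"
    and n2: "emeasure \<mu> ({0..\<infinity>} \<times> {ereal y}) = 0"
  shows "((\<lambda>t. \<nu> t ({0..ereal x} \<times> {ereal y..\<infinity>})) \<longlongrightarrow> measure \<mu> ({0..ereal x} \<times> {ereal y..\<infinity>})) at_top"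
proof (rule vague_apply[OF vag' rad])
  let ?R = "{0..ereal x} \<times> {ereal y..\<infinity>}"
  let ?U = "{-1<..<ereal x} \<times> {ereal y<..}"
  show "closed ?R" by (intro closed_Times closed_atLeastAtMost)
  show "compact ?R" by (intro compact_Times compact_ereal_Icc)
  have "?R \<subseteq> {0..\<infinity>} \<times> {ereal y..\<infinity>}" by auto
  then show "?R \<subseteq> Espace" using Espace_sub[OF y] by blast
  show "open ?U" by (intro open_Times open_greaterThan open_greaterThanLessThan)
  show "?U \<inter> Espace \<subseteq> ?R" by (auto simp: Espace_def)
  show "{ereal x} \<times> {ereal y..\<infinity>} \<union> {0..\<infinity>} \<times> {ereal y} \<in> sets \<mu>"
    using x y by (intro sets.Un sets_mu_rect[where y=y]) auto
  have m1: "\<And>q::ereal. 0 \<le> q \<Longrightarrow> -1 < q" using less_le_trans[of "-1::ereal" 0] by auto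
  show "?R - ?U \<subseteq> {ereal x} \<times> {ereal y..\<infinity>} \<union> {0..\<infinity>} \<times> {ereal y}"
  proof
    fix p assume "p \<in> ?R - ?U"
    then show "p \<in> {ereal x} \<times> {ereal y..\<infinity>} \<union> {0..\<infinity>} \<times> {ereal y}"
      using m1[of "fst p"] by (cases p) (auto simp: less_le)
  qed
  show "emeasure \<mu> ({ereal x} \<times> {ereal y..\<infinity>} \<union> {0..\<infinity>} \<times> {ereal y}) = 0"
    using x y n1 n2 by (intro null_union sets_mu_rect[where y=y]) auto
qed

lemma vague_full:
  assumes y: "y > 0" and n2: "emeasure \<mu> ({0..\<infinity>} \<times> {ereal y}) = 0"
  shows "((\<lambda>t. \<nu> t ({0..\<infinity>} \<times> {ereal y..\<infinity>})) \<longlongrightarrow> measure \<mu> ({0..\<infinity>} \<times> {ereal y..\<infinity>})) at_top"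
proof (rule vague_apply[OF vag' rad])
  let ?R = "{0..(\<infinity>::ereal)} \<times> {ereal y..\<infinity>}"
  let ?U = "{(-1::ereal)<..} \<times> {ereal y<..}"
  show "closed ?R" by (intro closed_Times closed_atLeastAtMost)
  show "compact ?R" by (intro compact_Times compact_ereal_Icc)
  show "?R \<subseteq> Espace" using Espace_sub[OF y] by blast
  show "open ?U" by (intro open_Times open_greaterThan)
  show "?U \<inter> Espace \<subseteq> ?R" by (auto simp: Espace_def)
  show "{0..\<infinity>} \<times> {ereal y} \<in> sets \<mu>"
    using y by (intro sets_mu_rect[where y=y]) auto
  have m1: "\<And>q::ereal. 0 \<le> q \<Longrightarrow> -1 < q" using less_le_trans[of "-1::ereal" 0] by auto
  show "?R - ?U \<subseteq> {0..\<infinity>} \<times> {ereal y}"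
  proof
    fix p assume "p \<in> ?R - ?U"
    then show "p \<in> {0..\<infinity>} \<times> {ereal y}"
      using m1[of "fst p"] by (cases p) (auto simp: less_le)
  qed
  show "emeasure \<mu> ({0..\<infinity>} \<times> {ereal y}) = 0" by (rule n2)
qed

lemma nu_upper: "\<nu> t ({ereal K..\<infinity>} \<times> {ereal y..\<infinity>}) =
   t * prob {\<omega>\<in>space M. K \<le> (b - X \<omega>) / \<alpha> t \<and> y \<le> Y \<omega> / a t}"
  unfolding \<nu>_def by (auto intro!: arg_cong[where f="\<lambda>A. t * prob A"])

lemma nu_lower: "\<nu> t ({0..ereal x} \<times> {ereal y..\<infinity>}) =
   t * prob {\<omega>\<in>space M. 0 \<le> (b - X \<omega>) / \<alpha> t \<and> (b - X \<omega>) / \<alpha> t \<le> x \<and> y \<le> Y \<omega> / a t}"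
  unfolding \<nu>_def by (auto intro!: arg_cong[where f="\<lambda>A. t * prob A"])

lemma nu_full: "\<nu> t ({0..\<infinity>} \<times> {ereal y..\<infinity>}) =
   t * prob {\<omega>\<in>space M. 0 \<le> (b - X \<omega>) / \<alpha> t \<and> y \<le> Y \<omega> / a t}"
  unfolding \<nu>_def by (auto intro!: arg_cong[where f="\<lambda>A. t * prob A"])

definition "Fd y x = measure \<mu> ({0..ereal x} \<times> {ereal y<..\<infinity>})"
definition "Ld y = measure \<mu> ({0..\<infinity>} \<times> {ereal y<..\<infinity>})"

lemma tail_split:
  assumes y: "y > 0" and x: "x \<ge> 0"
  shows "measure \<mu> ({ereal x<..\<infinity>} \<times> {ereal y<..\<infinity>}) = Ld y - Fd y x"
proof -
  have e: "{0..\<infinity>} \<times> {ereal y<..\<infinity>} = {0..ereal x} \<times> {ereal y<..\<infinity>} \<union> {ereal x<..\<infinity>} \<times> {ereal y<..\<infinity>}"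
    using x by (auto intro: ereal_less_tr)
  have "Ld y = Fd y x + measure \<mu> ({ereal x<..\<infinity>} \<times> {ereal y<..\<infinity>})"
    unfolding Ld_def Fd_def e
  proof (rule measure_Union)
    have sub: "{ereal y<..\<infinity>} \<subseteq> {ereal y..(\<infinity>::ereal)}" by (auto intro: less_imp_le)
    show "emeasure \<mu> ({0..ereal x} \<times> {ereal y<..\<infinity>}) \<noteq> \<infinity>"
      using fin_mu_sub[OF y, of "{0..ereal x} \<times> {ereal y<..\<infinity>}"] Sigma_mono[of "{0..ereal x}" "{0..\<infinity>}" "\<lambda>_. {ereal y<..\<infinity>}" "\<lambda>_. {ereal y..\<infinity>}"] sub by auto
    have s1: "{ereal x<..\<infinity>} \<subseteq> {0..(\<infinity>::ereal)}" using x ereal_less_tr[of x] by auto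
    have "{ereal x<..\<infinity>} \<times> {ereal y<..\<infinity>} \<subseteq> {0..\<infinity>} \<times> {ereal y..\<infinity>}"
      using s1 sub by (intro Sigma_mono) auto
    then have "emeasure \<mu> ({ereal x<..\<infinity>} \<times> {ereal y<..\<infinity>}) < \<infinity>"
      by (rule fin_mu_sub[OF y])
    then show "emeasure \<mu> ({ereal x<..\<infinity>} \<times> {ereal y<..\<infinity>}) \<noteq> \<infinity>" by simp
    show "{0..ereal x} \<times> {ereal y<..\<infinity>} \<in> sets \<mu>" using y by (intro sets_mu_rect[where y=y]) auto
    show "{ereal x<..\<infinity>} \<times> {ereal y<..\<infinity>} \<in> sets \<mu>" using y x by (intro sets_mu_rect[where y=y]) (auto intro: ereal_less_tr)
    show "{0..ereal x} \<times> {ereal y<..\<infinity>} \<inter> {ereal x<..\<infinity>} \<times> {ereal y<..\<infinity>} = {}" by auto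
  qed
  then show ?thesis by simp
qed

lemma tail_small:
  assumes y: "y > 0" and e: "e > 0"
  shows "\<exists>x0\<ge>0. \<forall>x\<ge>x0. measure \<mu> ({ereal x<..\<infinity>} \<times> {ereal y<..\<infinity>}) < e"
proof -
  have "((\<lambda>x. Fd y x) \<longlongrightarrow> Ld y) at_top"
    using nd y unfolding nondeg_df_def Fd_def[abs_def] Ld_def by blast
  then have "eventually (\<lambda>x. dist (Fd y x) (Ld y) < e) at_top" using e tendstoD by blast
  then obtain x1 where x1: "\<And>x. x \<ge> x1 \<Longrightarrow> dist (Fd y x) (Ld y) < e"
    unfolding eventually_at_top_linorder by blast
  show ?thesis
  proof (intro exI[of _ "max x1 0"] conjI allI impI)
    fix x assume "max x1 0 \<le> x"
    then have "dist (Fd y x) (Ld y) < e" "x \<ge> 0" using x1 by auto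
    then show "measure \<mu> ({ereal x<..\<infinity>} \<times> {ereal y<..\<infinity>}) < e"
      using tail_split[OF y] by (auto simp: dist_real_def)
  qed simp
qed

end

context T511 begin

lemma div_at_top: fixes l :: real assumes "l > 0" shows "filterlim (\<lambda>t. t / l) at_top at_top"
proof -
  have "LIM x at_top. (1/l) * x :> at_top"
    by (rule filterlim_tendsto_pos_mult_at_top[OF tendsto_const _ filterlim_ident]) (use assms in simp)
  then show ?thesis by simp
qed

lemma Fd_mono: "y > 0 \<Longrightarrow> 0 \<le> x \<Longrightarrow> x \<le> x' \<Longrightarrow> Fd y x \<le> Fd y x'"
  using nd unfolding nondeg_df_def Fd_def mono_on_def by auto

lemma alpha_to_0:
  assumes c: "c > 0"
  shows "eventually (\<lambda>t. \<alpha> t < c) at_top"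
proof (rule ccontr)
  assume neg: "\<not> eventually (\<lambda>t. \<alpha> t < c) at_top"
  have nd1: "nondeg_df (Fd 1) (Ld 1)" using nd unfolding Fd_def[abs_def] Ld_def by simp
  then obtain x0 where x0: "x0 \<ge> 0" "Fd 1 x0 < Ld 1" unfolding nondeg_df_def by blast
  have "continuous (at_right x0) (Fd 1)" using nd1 x0 unfolding nondeg_df_def by blast
  then have "(Fd 1 \<longlongrightarrow> Fd 1 x0) (at_right x0)" by (simp add: continuous_within)
  then have "eventually (\<lambda>x. Fd 1 x < Ld 1) (at_right x0)"
    using x0(2) order_tendstoD(2) by blast
  then obtain bb where bb: "bb > x0" "\<And>x. x > x0 \<Longrightarrow> x < bb \<Longrightarrow> Fd 1 x < Ld 1"
    using eventually_at_right[of x0 "x0 + 1"] by auto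
  obtain y' where y': "1/2 < y'" "y' < 1" "emeasure \<mu> ({0..\<infinity>} \<times> {ereal y'}) = 0"
    using hslice[of "1/2" "1/2" 1] by auto
  have y'pos: "y' > 0" using y' by simp
  obtain x1 where x1: "x0 < x1" "x1 < bb" "emeasure \<mu> ({ereal x1} \<times> {ereal y'..\<infinity>}) = 0"
    using vslice[OF y'pos x0(1) bb(1)] by auto
  have x1pos: "x1 > 0" using x0 x1 by simp
  have Fx1: "Fd 1 x1 < Ld 1" using bb x1 by simp
  let ?A = "{0..ereal x1} \<times> {ereal y'..\<infinity>}"
  let ?B = "{0..\<infinity>} \<times> {ereal y'..\<infinity>}"
  have limA: "((\<lambda>t. \<nu> t ?A) \<longlongrightarrow> measure \<mu> ?A) at_top"
    by (rule vague_lower[OF x1pos y'pos x1(3) y'(3)])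
  have limB: "((\<lambda>t. \<nu> t ?B) \<longlongrightarrow> measure \<mu> ?B) at_top"
    by (rule vague_full[OF y'pos y'(3)])
  have gap: "measure \<mu> ?B - measure \<mu> ?A > 0"
  proof -
    have AB: "?A \<subseteq> ?B" by auto
    have Bs: "?B \<in> sets \<mu>" using y'pos by (intro sets_mu_rect[where y=y']) auto
    have As: "?A \<in> sets \<mu>" using y'pos by (intro sets_mu_rect[where y=y']) auto
    have Bf: "emeasure \<mu> ?B \<noteq> \<infinity>" using fin_mu[OF y'pos] by simp
    have "measure \<mu> ?B - measure \<mu> ?A = measure \<mu> (?B - ?A)"
      using measure_Diff[OF Bf Bs As AB] by simp
    moreover have T: "{ereal x1<..\<infinity>} \<times> {ereal 1<..\<infinity>} \<subseteq> ?B - ?A"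
    proof
      fix p assume p: "p \<in> {ereal x1<..\<infinity>} \<times> {ereal 1<..\<infinity>}"
      then have "ereal x1 < fst p" "ereal 1 < snd p" by auto
      moreover have yy: "ereal y' \<le> ereal 1" using y' by simp
      ultimately have "ereal y' \<le> snd p"
        by (meson le_less_trans less_imp_le)
      moreover have "0 \<le> fst p" "\<not> fst p \<le> ereal x1"
        using x1pos ereal_less_tr[of x1 "fst p"] \<open>ereal x1 < fst p\<close> by auto
      ultimately
      show "p \<in> ?B - ?A" by (cases p) auto
    qed
    have "measure \<mu> ({ereal x1<..\<infinity>} \<times> {ereal 1<..\<infinity>}) \<le> measure \<mu> (?B - ?A)"
    proof (rule measure_mono_fmeasurable[OF T])
      show "{ereal x1<..\<infinity>} \<times> {ereal 1<..\<infinity>} \<in> sets \<mu>"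
        using x1pos ereal_less_tr[of x1] by (intro sets_mu_rect[where y=1]) auto
      have "emeasure \<mu> (?B - ?A) < \<infinity>" using y'pos by (intro fin_mu_sub[where y=y']) auto
      then show "?B - ?A \<in> fmeasurable \<mu>" using Bs As by (auto simp: fmeasurable_def)
    qed
    moreover have "measure \<mu> ({ereal x1<..\<infinity>} \<times> {ereal 1<..\<infinity>}) = Ld 1 - Fd 1 x1"
      using tail_split[of 1 x1] x1pos by simp
    ultimately show ?thesis using Fx1 by linarith
  qed
  define K where "K = max 1 (2 * b / (c * x1))"
  have Kpos: "K > 0" and K1: "K \<ge> 2 * b / (c * x1)" unfolding K_def by auto
  define l where "l = K powr (-1/\<rho>)"
  have lpos: "l > 0" unfolding l_def using Kpos by simp
  have lrho: "l powr \<rho> = 1 / K"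
  proof -
    have "l powr \<rho> = K powr ((-1/\<rho>) * \<rho>)" unfolding l_def by (rule powr_powr)
    also have "(-1/\<rho>) * \<rho> = -1" using rho by simp
    also have "K powr (-1) = 1 / K" using Kpos by (simp add: powr_minus divide_inverse)
    finally show ?thesis .
  qed
  have "((\<lambda>s. \<alpha> (l * s) / \<alpha> s) \<longlongrightarrow> l powr \<rho>) at_top"
    using rva lpos unfolding regvar_def by blast
  then have "((\<lambda>t. \<alpha> (l * (t / l)) / \<alpha> (t / l)) \<longlongrightarrow> 1 / K) at_top"
    unfolding lrho by (rule filterlim_compose[OF _ div_at_top[OF lpos]])
  then have lim1: "((\<lambda>t. \<alpha> t / \<alpha> (t / l)) \<longlongrightarrow> 1 / K) at_top"
    using lpos by simp
  have ev1: "eventually (\<lambda>t. \<alpha> t / \<alpha> (t / l) < 2 / K) at_top"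
    by (rule order_tendstoD(2)[OF lim1]) (use Kpos in \<open>simp add: divide_strict_right_mono\<close>)
  have limG: "((\<lambda>t. \<nu> (t / l) ?B - \<nu> (t / l) ?A) \<longlongrightarrow> measure \<mu> ?B - measure \<mu> ?A) at_top"
    by (intro tendsto_diff filterlim_compose[OF limB div_at_top[OF lpos]]
        filterlim_compose[OF limA div_at_top[OF lpos]])
  have ev2: "eventually (\<lambda>t. \<nu> (t / l) ?B - \<nu> (t / l) ?A > 0) at_top"
    using order_tendstoD(1)[OF limG gap] .
  have "eventually (\<lambda>t. t > 0 \<and> \<alpha> t / \<alpha> (t / l) < 2 / K \<and> \<nu> (t / l) ?B - \<nu> (t / l) ?A > 0) at_top"
    using ev1 ev2 eventually_gt_at_top[of 0] by eventually_elim auto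
  then obtain T0 where T0: "\<And>t. t \<ge> T0 \<Longrightarrow> t > 0 \<and> \<alpha> t / \<alpha> (t / l) < 2 / K \<and> \<nu> (t / l) ?B - \<nu> (t / l) ?A > 0"
    unfolding eventually_at_top_linorder by blast
  from neg obtain t where t: "t \<ge> T0" "\<not> \<alpha> t < c"
    unfolding eventually_at_top_linorder by blast
  have tpos: "t > 0" and r: "\<alpha> t / \<alpha> (t / l) < 2 / K" and g: "\<nu> (t / l) ?B - \<nu> (t / l) ?A > 0"
    using T0[OF t(1)] by auto
  define s where "s = t / l"
  have spos: "s > 0" unfolding s_def using tpos lpos by simp
  have as: "\<alpha> s > 0" using alpha_pos[OF spos] .
  have "\<alpha> t < 2 / K * \<alpha> s" using r as unfolding s_def by (simp add: divide_less_eq)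
  then have "c < 2 / K * \<alpha> s" using t(2) by linarith
  then have "c * K / 2 < \<alpha> s" using Kpos by (simp add: field_simps)
  moreover have "b / x1 \<le> c * K / 2"
    using K1 c x1pos by (simp add: field_simps)
  ultimately have "b / x1 < \<alpha> s" by linarith
  then have bx: "b / \<alpha> s < x1" using as x1pos bpos by (simp add: field_simps)
  have "{\<omega>\<in>space M. 0 \<le> (b - X \<omega>) / \<alpha> s \<and> (b - X \<omega>) / \<alpha> s \<le> x1 \<and> y' \<le> Y \<omega> / a s}
      = {\<omega>\<in>space M. 0 \<le> (b - X \<omega>) / \<alpha> s \<and> y' \<le> Y \<omega> / a s}"
  proof (intro Collect_cong conj_cong refl iffI)
    fix \<omega> assume "\<omega> \<in> space M"
    then have "X \<omega> \<ge> 0" using Xnn by auto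
    then have "(b - X \<omega>) / \<alpha> s \<le> b / \<alpha> s" using as by (simp add: divide_right_mono)
    then show "(b - X \<omega>) / \<alpha> s \<le> x1 \<and> y' \<le> Y \<omega> / a s \<Longrightarrow> y' \<le> Y \<omega> / a s"
      "y' \<le> Y \<omega> / a s \<Longrightarrow> (b - X \<omega>) / \<alpha> s \<le> x1 \<and> y' \<le> Y \<omega> / a s"
      using bx by auto
  qed
  then have "\<nu> s ?A = \<nu> s ?B" unfolding nu_lower nu_full by simp
  then show False using g unfolding s_def by simp
qed

end

context T511 begin

lemma small_joint:
  assumes d: "\<delta> > 0" and w: "w > 0" and e: "e > 0"
  shows "eventually (\<lambda>t. t * prob {\<omega>\<in>space M. X \<omega> \<le> b - \<delta> \<and> w < Y \<omega> / a t} < e) at_top"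
proof -
  obtain w' where w': "w/2 < w'" "w' < w" "emeasure \<mu> ({0..\<infinity>} \<times> {ereal w'}) = 0"
    using hslice[of "w/2" "w/2" w] w by auto
  have w'pos: "w' > 0" using w' w by simp
  obtain x0 where x0: "x0 \<ge> 0" "\<And>x. x \<ge> x0 \<Longrightarrow> measure \<mu> ({ereal x<..\<infinity>} \<times> {ereal (w/2)<..\<infinity>}) < e"
    using tail_small[of "w/2" e] w e by auto
  obtain K where K: "x0 + 1 < K" "K < x0 + 2" "emeasure \<mu> ({ereal K} \<times> {ereal w'..\<infinity>}) = 0"
    using vslice[OF w'pos, of "x0+1" "x0+2"] x0 by auto
  have Kpos: "K > 0" using K x0 by simp
  let ?R = "{ereal K..\<infinity>} \<times> {ereal w'..\<infinity>}"
  let ?Q = "{ereal x0<..\<infinity>} \<times> {ereal (w/2)<..\<infinity>}"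
  have RQ: "?R \<subseteq> ?Q"
  proof
    fix p assume "p \<in> ?R"
    then have "ereal K \<le> fst p" "ereal w' \<le> snd p" by auto
    moreover have "ereal x0 < ereal K" "ereal (w/2) < ereal w'" using K w' by auto
    ultimately have "ereal x0 < fst p" "ereal (w/2) < snd p" by (meson less_le_trans)+
    then show "p \<in> ?Q" by (cases p) auto
  qed
  have mR: "measure \<mu> ?R < e"
  proof -
    have "measure \<mu> ?R \<le> measure \<mu> ?Q"
    proof (rule measure_mono_fmeasurable[OF RQ])
      show "?R \<in> sets \<mu>" using w'pos Kpos ereal_le_tr[of K] by (intro sets_mu_rect[where y=w']) auto
      have Qs: "?Q \<in> sets \<mu>" using w x0 ereal_less_tr[of x0]
        by (intro sets_mu_rect[where y="w/2"]) (auto intro: less_imp_le)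
      have "?Q \<subseteq> {0..\<infinity>} \<times> {ereal (w/2)..\<infinity>}" using x0 ereal_less_tr[of x0]
        by (intro Sigma_mono) (auto intro: less_imp_le)
      then have "emeasure \<mu> ?Q < \<infinity>" using w by (intro fin_mu_sub[where y="w/2"]) auto
      then show "?Q \<in> fmeasurable \<mu>" using Qs by (auto simp: fmeasurable_def)
    qed
    then show ?thesis using x0(2)[of x0] by simp
  qed
  have lim: "((\<lambda>t. \<nu> t ?R) \<longlongrightarrow> measure \<mu> ?R) at_top"
    by (rule vague_upper[OF Kpos w'pos K(3) w'(3)])
  have ev1: "eventually (\<lambda>t. \<nu> t ?R < e) at_top"
    using order_tendstoD(2)[OF lim mR] .
  have ev2: "eventually (\<lambda>t. \<alpha> t < \<delta> / K) at_top"
    using alpha_to_0[of "\<delta>/K"] d Kpos by simp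
  show ?thesis
    using ev1 ev2 eventually_gt_at_top[of 0]
  proof eventually_elim
    case (elim t)
    have at: "\<alpha> t > 0" using alpha_pos elim by simp
    have sub: "{\<omega>\<in>space M. X \<omega> \<le> b - \<delta> \<and> w < Y \<omega> / a t}
        \<subseteq> {\<omega>\<in>space M. K \<le> (b - X \<omega>) / \<alpha> t \<and> w' \<le> Y \<omega> / a t}"
    proof safe
      fix \<omega> assume "X \<omega> \<le> b - \<delta>" "w < Y \<omega> / a t"
      have "K < \<delta> / \<alpha> t" using elim(2) at Kpos by (simp add: field_simps)
      also have "\<delta> / \<alpha> t \<le> (b - X \<omega>) / \<alpha> t" using \<open>X \<omega> \<le> b - \<delta>\<close> at
        by (intro divide_right_mono) auto
      finally show "K \<le> (b - X \<omega>) / \<alpha> t" by simp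
      show "w' \<le> Y \<omega> / a t" using \<open>w < Y \<omega> / a t\<close> w' by simp
    qed
    have "prob {\<omega>\<in>space M. X \<omega> \<le> b - \<delta> \<and> w < Y \<omega> / a t}
        \<le> prob {\<omega>\<in>space M. K \<le> (b - X \<omega>) / \<alpha> t \<and> w' \<le> Y \<omega> / a t}"
      by (rule finite_measure_mono[OF sub]) measurable
    then have "t * prob {\<omega>\<in>space M. X \<omega> \<le> b - \<delta> \<and> w < Y \<omega> / a t} \<le> \<nu> t ?R"
      unfolding nu_upper using elim(3) by (simp add: mult_left_mono)
    then show ?case using elim(1) by simp
  qed
qed

lemma powr_L: assumes "z > 0" "c > 0" shows "(z / c) powr (-1/\<gamma>) = z powr (-1/\<gamma>) * c powr (1/\<gamma>)"
proof -
  have "(z / c) powr (-1/\<gamma>) = z powr (-1/\<gamma>) / c powr (-1/\<gamma>)"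
    using assms by (simp add: powr_divide)
  also have "c powr (-1/\<gamma>) = inverse (c powr (1/\<gamma>))"
    using powr_minus[of c "1/\<gamma>"] by simp
  finally show ?thesis by (simp add: divide_inverse)
qed

lemma lim_XY:
  assumes z: "z > 0"
  shows "((\<lambda>t. t * prob {\<omega>\<in>space M. X \<omega> * Y \<omega> / a t > z}) \<longlongrightarrow> z powr (-1/\<gamma>) * b powr (1/\<gamma>)) at_top"
proof (rule tendstoI)
  fix e :: real assume e: "e > 0"
  let ?L = "z powr (-1/\<gamma>) * b powr (1/\<gamma>)"
  let ?f = "\<lambda>t. t * prob {\<omega>\<in>space M. X \<omega> * Y \<omega> / a t > z}"
  have limU: "((\<lambda>t. t * prob {\<omega>\<in>space M. Y \<omega> / a t > z / b}) \<longlongrightarrow> ?L) at_top"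
  proof -
    have "z / b > 0" using z bpos by simp
    then have "((\<lambda>t. t * prob {\<omega>\<in>space M. Y \<omega> / a t > z / b}) \<longlongrightarrow> (z/b) powr (-1/\<gamma>)) at_top"
      using Ylim by blast
    then show ?thesis unfolding powr_L[OF z bpos] .
  qed
  have evU0: "eventually (\<lambda>t. t * prob {\<omega>\<in>space M. Y \<omega> / a t > z / b} < ?L + e) at_top"
    using e by (intro order_tendstoD(2)[OF limU]) simp
  have evU: "eventually (\<lambda>t. ?f t < ?L + e) at_top"
    using evU0 eventually_gt_at_top[of 0]
  proof eventually_elim
    case (elim t)
    have at: "a t > 0" using a_pos elim by simp
    have sub: "{\<omega>\<in>space M. X \<omega> * Y \<omega> / a t > z} \<subseteq>
        {\<omega>\<in>space M. Y \<omega> / a t > z / b} \<union> {\<omega>\<in>space M. X \<omega> > b}"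
    proof safe
      fix \<omega> assume \<omega>: "\<omega> \<in> space M" "X \<omega> * Y \<omega> / a t > z" "\<not> b < X \<omega>"
      have "X \<omega> * Y \<omega> \<le> b * Y \<omega>" using \<omega> Ynn by (intro mult_right_mono) auto
      then have "z < b * Y \<omega> / a t" using \<omega>(2) at by (smt (verit) divide_right_mono)
      then show "z / b < Y \<omega> / a t" using bpos by (simp add: field_simps)
    qed
    have "prob {\<omega>\<in>space M. X \<omega> * Y \<omega> / a t > z} \<le>
        prob ({\<omega>\<in>space M. Y \<omega> / a t > z / b} \<union> {\<omega>\<in>space M. X \<omega> > b})"
      by (rule finite_measure_mono[OF sub]) measurable
    also have "\<dots> \<le> prob {\<omega>\<in>space M. Y \<omega> / a t > z / b} + prob {\<omega>\<in>space M. X \<omega> > b}"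
      by (rule measure_Un_le) measurable
    finally have "?f t \<le> t * prob {\<omega>\<in>space M. Y \<omega> / a t > z / b}"
      using X_le_b elim(2) by (simp add: mult_left_mono)
    then show ?case using elim(1) by simp
  qed
  have "((\<lambda>d. (z / (b - d)) powr (-1/\<gamma>)) \<longlongrightarrow> (z / (b - 0)) powr (-1/\<gamma>)) (at_right 0)"
    using z bpos by (intro tendsto_intros) auto
  then have "((\<lambda>d. (z / (b - d)) powr (-1/\<gamma>)) \<longlongrightarrow> ?L) (at_right 0)"
    using powr_L[OF z bpos] by simp
  then have "eventually (\<lambda>d. (z / (b - d)) powr (-1/\<gamma>) > ?L - e/3) (at_right 0)"
    using e by (intro order_tendstoD(1)) auto
  then have "\<exists>bb>0. \<forall>d>0. d < bb \<longrightarrow> (z / (b - d)) powr (-1/\<gamma>) > ?L - e/3"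
    by (subst (asm) eventually_at_right[of "0::real" 1]) auto
  then obtain bb where bb: "bb > 0" "\<And>d. d > 0 \<Longrightarrow> d < bb \<Longrightarrow> (z / (b - d)) powr (-1/\<gamma>) > ?L - e/3"
    by blast
  define d where "d = min bb b / 2"
  have d: "d > 0" "d < bb" "d < b" unfolding d_def using bb bpos by auto
  define w where "w = z / (b - d)"
  have w: "w > 0" unfolding w_def using d z by simp
  have wL: "w powr (-1/\<gamma>) > ?L - e/3" unfolding w_def using bb d by simp
  have limW: "((\<lambda>t. t * prob {\<omega>\<in>space M. Y \<omega> / a t > w}) \<longlongrightarrow> w powr (-1/\<gamma>)) at_top"
    using Ylim w by blast
  have evW: "eventually (\<lambda>t. t * prob {\<omega>\<in>space M. Y \<omega> / a t > w} > w powr (-1/\<gamma>) - e/3) at_top"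
    using e by (intro order_tendstoD(1)[OF limW]) simp
  have evJ: "eventually (\<lambda>t. t * prob {\<omega>\<in>space M. X \<omega> \<le> b - d \<and> w < Y \<omega> / a t} < e/3) at_top"
    using e by (intro small_joint d(1) w) simp
  have evL: "eventually (\<lambda>t. ?f t > ?L - e) at_top"
    using evW evJ eventually_gt_at_top[of 0]
  proof eventually_elim
    case (elim t)
    have at: "a t > 0" using a_pos elim by simp
    have sub: "{\<omega>\<in>space M. Y \<omega> / a t > w} \<subseteq>
        {\<omega>\<in>space M. X \<omega> * Y \<omega> / a t > z} \<union> {\<omega>\<in>space M. X \<omega> \<le> b - d \<and> w < Y \<omega> / a t}"
    proof safe
      fix \<omega> assume \<omega>: "\<omega> \<in> space M" "Y \<omega> / a t > w" "\<not> X \<omega> * Y \<omega> / a t > z"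
      show "X \<omega> \<le> b - d"
      proof (rule ccontr)
        assume "\<not> X \<omega> \<le> b - d"
        then have "(b - d) * w < X \<omega> * (Y \<omega> / a t)" using \<omega>(2) w d
          by (intro mult_strict_mono) auto
        moreover have "(b - d) * w = z" unfolding w_def using d by simp
        ultimately show False using \<omega>(3) by simp
      qed
    qed
    have "prob {\<omega>\<in>space M. Y \<omega> / a t > w} \<le>
        prob ({\<omega>\<in>space M. X \<omega> * Y \<omega> / a t > z} \<union> {\<omega>\<in>space M. X \<omega> \<le> b - d \<and> w < Y \<omega> / a t})"
      by (rule finite_measure_mono[OF sub]) measurable
    also have "\<dots> \<le> prob {\<omega>\<in>space M. X \<omega> * Y \<omega> / a t > z} + prob {\<omega>\<in>space M. X \<omega> \<le> b - d \<and> w < Y \<omega> / a t}"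
      by (rule measure_Un_le) measurable
    finally have "t * prob {\<omega>\<in>space M. Y \<omega> / a t > w} \<le> ?f t + t * prob {\<omega>\<in>space M. X \<omega> \<le> b - d \<and> w < Y \<omega> / a t}"
      using elim(3) by (simp add: mult_left_mono distrib_left[symmetric])
    then show ?case using elim(1,2) wL by simp
  qed
  show "eventually (\<lambda>t. dist (?f t) ?L < e) at_top"
    using evU evL by eventually_elim (simp add: dist_real_def abs_less_iff)
qed

end

context T511 begin

definition "TT z = prob {\<omega>\<in>space M. X \<omega> * Y \<omega> > z}"

lemma TT_anti: "z \<le> z' \<Longrightarrow> TT z' \<le> TT z"
  unfolding TT_def by (rule finite_measure_mono) (auto, measurable)

lemma TT_meas: "TT \<in> borel_measurable (restrict_space borel {0<..})"
proof -
  have "mono (\<lambda>z. - TT z)" unfolding mono_def using TT_anti by simp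
  then have "(\<lambda>z. - TT z) \<in> borel_measurable borel" by (rule borel_measurable_mono)
  then have "(\<lambda>z. - (- TT z)) \<in> borel_measurable borel" by measurable
  then have "TT \<in> borel_measurable borel" by simp
  then show ?thesis by (rule measurable_restrict_space1)
qed

lemma TT_eq: "t > 0 \<Longrightarrow> prob {\<omega>\<in>space M. X \<omega> * Y \<omega> / a t > z} = TT (a t * z)"
  unfolding TT_def using a_pos[of t]
  by (intro arg_cong[where f=prob] Collect_cong) (auto simp: pos_less_divide_eq mult.commute)

definition "h z = z powr (-1/\<gamma>) * b powr (1/\<gamma>)"

lemma limT: "z > 0 \<Longrightarrow> ((\<lambda>t. t * TT (a t * z)) \<longlongrightarrow> h z) at_top"
  unfolding h_def
  by (rule Lim_transform_eventually[OF lim_XY]) (auto intro: eventually_mono[OF eventually_gt_at_top[of 0]] simp: TT_eq)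

lemma h_pos: "z > 0 \<Longrightarrow> h z > 0" unfolding h_def using bpos by simp

lemma seq_top: assumes "\<tau> > (1::real)" shows "filterlim (\<lambda>k::nat. \<tau> ^ k) at_top sequentially"
  unfolding filterlim_at_top eventually_sequentially
proof
  fix Z :: real
  obtain n where "Z < \<tau> ^ n" using real_arch_pow[OF assms] by blast
  moreover have "\<And>k. k \<ge> n \<Longrightarrow> \<tau> ^ n \<le> \<tau> ^ k" using assms by (intro power_increasing) auto
  ultimately show "\<exists>N. \<forall>k\<ge>N. Z \<le> \<tau> ^ k" by (meson less_imp_le order_trans)
qed

lemma ratio_seq:
  assumes "\<tau> > 1"
  shows "((\<lambda>k. a (\<tau> ^ Suc k) / a (\<tau> ^ k)) \<longlongrightarrow> \<tau> powr \<gamma>) sequentially"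
proof -
  have "((\<lambda>s. a (\<tau> * s) / a s) \<longlongrightarrow> \<tau> powr \<gamma>) at_top"
    using rvA assms unfolding regvar_def by auto
  from filterlim_compose[OF this seq_top[OF assms]] show ?thesis by simp
qed

lemma a_seq_unbounded:
  assumes tau: "\<tau> > 1"
  shows "eventually (\<lambda>k. a (\<tau> ^ k) > Z) sequentially"
proof -
  have tg: "\<tau> powr \<gamma> > 1" using tau gam by (simp add: gr_one_powr)
  define q where "q = (1 + \<tau> powr \<gamma>) / 2"
  have q: "q > 1" "q < \<tau> powr \<gamma>" unfolding q_def using tg by auto
  have "eventually (\<lambda>k. a (\<tau> ^ Suc k) / a (\<tau> ^ k) > q) sequentially"
    using order_tendstoD(1)[OF ratio_seq[OF tau] q(2)] .
  then obtain K0 where K0: "\<And>k. k \<ge> K0 \<Longrightarrow> a (\<tau> ^ Suc k) / a (\<tau> ^ k) > q"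
    unfolding eventually_sequentially by blast
  have apos: "a (\<tau> ^ k) > 0" for k using a_pos tau by simp
  have grow: "a (\<tau> ^ (K0 + m)) \<ge> q ^ m * a (\<tau> ^ K0)" for m
  proof (induction m)
    case 0 then show ?case by simp
  next
    case (Suc m)
    have "a (\<tau> ^ Suc (K0 + m)) > q * a (\<tau> ^ (K0 + m))"
      using K0[of "K0 + m"] apos[of "K0 + m"] by (simp add: pos_less_divide_eq mult.commute)
    moreover have "q * a (\<tau> ^ (K0 + m)) \<ge> q * (q ^ m * a (\<tau> ^ K0))"
      using Suc q by (intro mult_left_mono) auto
    ultimately show ?case by simp
  qed
  obtain n where n: "Z / a (\<tau> ^ K0) < q ^ n" using real_arch_pow[OF q(1)] by blast
  then have Zn: "Z < q ^ n * a (\<tau> ^ K0)" using apos[of K0] by (simp add: divide_less_eq)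
  show ?thesis unfolding eventually_sequentially
  proof (intro exI[of _ "K0 + n"] allI impI)
    fix k assume "K0 + n \<le> k"
    then obtain m where m: "k = K0 + n + m" by (metis le_add_diff_inverse)
    have "q ^ n \<le> q ^ (n + m)" using q by (intro power_increasing) auto
    then have "q ^ n * a (\<tau> ^ K0) \<le> q ^ (n + m) * a (\<tau> ^ K0)"
      using apos[of K0] by (intro mult_right_mono) auto
    also have "\<dots> \<le> a (\<tau> ^ (K0 + (n + m)))" by (rule grow)
    finally show "Z < a (\<tau> ^ k)" using Zn m by (simp add: add.assoc)
  qed
qed

lemma TT_pos: assumes z: "z > 0" shows "TT z > 0"
proof -
  have lim: "((\<lambda>k::nat. 2 ^ k * TT (a (2 ^ k) * 1)) \<longlongrightarrow> h 1) sequentially"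
    using filterlim_compose[OF limT seq_top, of 1 2] by simp
  have "eventually (\<lambda>k::nat. 2 ^ k * TT (a (2 ^ k) * 1) > 0 \<and> a (2 ^ k) > z) sequentially"
  proof -
    have h1: "h 1 > 0" by (rule h_pos) simp
    have ev2: "eventually (\<lambda>k::nat. a (2 ^ k) > z) sequentially" by (rule a_seq_unbounded) simp
    show ?thesis using order_tendstoD(1)[OF lim h1] ev2
      by eventually_elim auto
  qed
  then obtain k :: nat where k: "2 ^ k * TT (a (2 ^ k)) > 0" "a (2 ^ k) > z"
    by (auto simp: eventually_sequentially)
  have "TT (a (2 ^ k)) > 0" using k(1) by (simp add: zero_less_mult_iff)
  moreover have "TT (a (2 ^ k)) \<le> TT z" using k(2) by (intro TT_anti) simp
  ultimately show ?thesis by simp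
qed

end

context T511 begin

lemma h_ratio: "c > 0 \<Longrightarrow> d > 0 \<Longrightarrow> h c / h d = c powr (-1/\<gamma>) * d powr (1/\<gamma>)"
proof -
  assume c: "c > 0" and d: "d > 0"
  have "h c / h d = c powr (-1/\<gamma>) / d powr (-1/\<gamma>)" unfolding h_def using bpos by simp
  also have "d powr (-1/\<gamma>) = inverse (d powr (1/\<gamma>))" using powr_minus[of d "1/\<gamma>"] by simp
  finally show ?thesis by (simp add: divide_inverse)
qed

lemma TT_ratio:
  assumes l: "l > 0"
  shows "((\<lambda>x. TT (l * x) / TT x) \<longlongrightarrow> l powr (-1/\<gamma>)) at_top"
proof (rule tendstoI)
  fix e :: real assume e: "e > 0"
  let ?L = "l powr (-1/\<gamma>)"
  have c1: "((\<lambda>r. ?L * r powr (1/\<gamma>)) \<longlongrightarrow> ?L * 1 powr (1/\<gamma>)) (at_right 1)"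
    by (intro tendsto_intros) auto
  have c2: "((\<lambda>r. ?L * r powr (-1/\<gamma>)) \<longlongrightarrow> ?L * 1 powr (-1/\<gamma>)) (at_right 1)"
    by (intro tendsto_intros) auto
  have "eventually (\<lambda>r. ?L * r powr (1/\<gamma>) < ?L + e) (at_right 1)"
    using e by (intro order_tendstoD(2)[OF c1]) simp
  moreover have "eventually (\<lambda>r. ?L * r powr (-1/\<gamma>) > ?L - e) (at_right 1)"
    using e by (intro order_tendstoD(1)[OF c2]) simp
  ultimately have "eventually (\<lambda>r. ?L * r powr (1/\<gamma>) < ?L + e \<and> ?L * r powr (-1/\<gamma>) > ?L - e) (at_right 1)"
    by eventually_elim auto
  then have "\<exists>bb>1. \<forall>r>1. r < bb \<longrightarrow> ?L * r powr (1/\<gamma>) < ?L + e \<and> ?L * r powr (-1/\<gamma>) > ?L - e"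
    by (subst (asm) eventually_at_right[of "1::real" 2]) auto
  then obtain bb where bb: "bb > 1" "\<And>r. r > 1 \<Longrightarrow> r < bb \<Longrightarrow> ?L * r powr (1/\<gamma>) < ?L + e \<and> ?L * r powr (-1/\<gamma>) > ?L - e"
    by blast
  define r where "r = (1 + bb) / 2"
  have r: "r > 1" "?L * r powr (1/\<gamma>) < ?L + e" "?L * r powr (-1/\<gamma>) > ?L - e"
    using bb(2)[of r] bb(1) unfolding r_def by auto
  define \<tau> where "\<tau> = r powr (1 / (2 * \<gamma>))"
  have tau: "\<tau> > 1" unfolding \<tau>_def using r gam by (simp add: gr_one_powr)
  have "\<tau> powr \<gamma> = r powr (1 / (2 * \<gamma>) * \<gamma>)" unfolding \<tau>_def by (rule powr_powr)
  also have "1 / (2 * \<gamma>) * \<gamma> = 1/2" using gam by simp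
  also have "r powr (1/2) < r powr 1" using r by (intro powr_less_mono) auto
  finally have taur: "\<tau> powr \<gamma> < r" using r by simp
  define A where "A k = a (\<tau> ^ k)" for k
  have Apos: "A k > 0" for k unfolding A_def using a_pos tau by simp
  have seqlim: "((\<lambda>k. \<tau> ^ k * TT (A k * c)) \<longlongrightarrow> h c) sequentially" if "c > 0" for c
    unfolding A_def using filterlim_compose[OF limT[OF that] seq_top[OF tau]] .
  have TTp: "TT (A k * c) > 0" if "c > 0" for k c using TT_pos Apos that by simp
  have rat: "((\<lambda>k. TT (A k * c) / TT (A k * d)) \<longlongrightarrow> h c / h d) sequentially"
    if "c > 0" "d > 0" for c d
  proof -
    have "((\<lambda>k. (\<tau> ^ k * TT (A k * c)) / (\<tau> ^ k * TT (A k * d))) \<longlongrightarrow> h c / h d) sequentially"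
      using that h_pos[of d] by (intro tendsto_divide seqlim) auto
    moreover have "(\<tau> ^ k * TT (A k * c)) / (\<tau> ^ k * TT (A k * d)) = TT (A k * c) / TT (A k * d)" for k
      using tau by simp
    ultimately show ?thesis by simp
  qed
  have r1: "h l / h r = ?L * r powr (1/\<gamma>)" using h_ratio l r by simp
  have r2: "h (l * r) / h 1 = ?L * r powr (-1/\<gamma>)"
    using h_ratio[of "l * r" 1] l r by (simp add: powr_mult)
  have ev: "eventually (\<lambda>k. A (Suc k) < r * A k \<and> TT (A k * l) / TT (A k * r) < ?L + e
      \<and> TT (A k * (l * r)) / TT (A k * 1) > ?L - e) sequentially"
  proof -
    have "eventually (\<lambda>k. a (\<tau> ^ Suc k) / a (\<tau> ^ k) < r) sequentially"
      using order_tendstoD(2)[OF ratio_seq[OF tau] taur] .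
    moreover have "eventually (\<lambda>k. TT (A k * l) / TT (A k * r) < ?L + e) sequentially"
      using order_tendstoD(2)[OF rat[of l r]] l r r1 by simp
    moreover have "eventually (\<lambda>k. TT (A k * (l * r)) / TT (A k * 1) > ?L - e) sequentially"
      using order_tendstoD(1)[OF rat[of "l * r" 1]] l r r2 by simp
    ultimately show ?thesis
    proof eventually_elim
      case (elim k)
      then show ?case using Apos[of k] unfolding A_def by (simp add: divide_less_eq)
    qed
  qed
  then obtain K1 where K1: "\<And>k. k \<ge> K1 \<Longrightarrow> A (Suc k) < r * A k \<and> TT (A k * l) / TT (A k * r) < ?L + e
      \<and> TT (A k * (l * r)) / TT (A k * 1) > ?L - e"
    unfolding eventually_sequentially by blast
  define X0 where "X0 = max 1 (Max (A ` {..K1}))"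
  show "eventually (\<lambda>x. dist (TT (l * x) / TT x) ?L < e) at_top"
    unfolding eventually_at_top_linorder
  proof (intro exI[of _ X0] allI impI)
    fix x assume x: "x \<ge> X0"
    have xpos: "x > 0" using x unfolding X0_def by simp
    let ?S = "{k. A k \<le> x}"
    have "eventually (\<lambda>k. A k > x) sequentially"
      unfolding A_def by (rule a_seq_unbounded[OF tau])
    then obtain N where N: "\<And>k. k \<ge> N \<Longrightarrow> A k > x" unfolding eventually_sequentially by blast
    have finS: "finite ?S"
    proof (rule finite_subset[of _ "{..<N}"])
      show "?S \<subseteq> {..<N}" using N by (auto simp: not_less[symmetric])
    qed simp
    have K1S: "K1 \<in> ?S"
    proof -
      have "A K1 \<le> Max (A ` {..K1})" by (rule Max_ge) auto
      then show ?thesis using x unfolding X0_def by simp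
    qed
    define k where "k = Max ?S"
    have kS: "k \<in> ?S" unfolding k_def using finS K1S by (intro Max_in) auto
    have kK1: "k \<ge> K1" unfolding k_def using finS K1S by (intro Max_ge)
    have "Suc k \<notin> ?S"
    proof
      assume "Suc k \<in> ?S"
      then have "Suc k \<le> k" unfolding k_def using finS by (intro Max_ge)
      then show False by simp
    qed
    then have xs: "x < A (Suc k)" by simp
    have kx: "A k \<le> x" using kS by simp
    from K1[OF kK1] have c: "A (Suc k) < r * A k" "TT (A k * l) / TT (A k * r) < ?L + e"
      "TT (A k * (l * r)) / TT (A k * 1) > ?L - e" by auto
    have xr: "x \<le> A k * r" using xs c(1) by (simp add: mult.commute)
    have Ak: "A k > 0" by (rule Apos)
    have Tx: "TT x > 0" using TT_pos xpos by simp
    have up: "TT (l * x) / TT x \<le> TT (A k * l) / TT (A k * r)"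
    proof (rule frac_le)
      show "0 \<le> TT (A k * l)" using TTp[of l k] l by simp
      show "TT (l * x) \<le> TT (A k * l)" using kx l by (intro TT_anti) (simp add: mult.commute)
      show "0 < TT (A k * r)" using TTp[of r k] r by simp
      show "TT (A k * r) \<le> TT x" using xr by (rule TT_anti)
    qed
    have lo: "TT (A k * (l * r)) / TT (A k * 1) \<le> TT (l * x) / TT x"
    proof (rule frac_le)
      show "0 \<le> TT (l * x)" using TT_pos[of "l * x"] l xpos by simp
      show "TT (A k * (l * r)) \<le> TT (l * x)"
      proof (rule TT_anti)
        have "l * x \<le> l * (A k * r)" using xr l by (intro mult_left_mono) auto
        then show "l * x \<le> A k * (l * r)" by (simp add: mult_ac)
      qed
      show "0 < TT x" by (rule Tx)
      show "TT x \<le> TT (A k * 1)" using kx by (intro TT_anti) simp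
    qed
    show "dist (TT (l * x) / TT x) ?L < e"
      using up lo c(2,3) by (simp add: dist_real_def abs_less_iff)
  qed
qed

lemma main: "regvar (-1/\<gamma>) (\<lambda>z. measure M {\<omega>\<in>space M. X \<omega> * Y \<omega> > z}) \<and>
         (\<forall>z>0. ((\<lambda>t. t * measure M {\<omega>\<in>space M. X \<omega> * Y \<omega> / a t > z})
                 \<longlongrightarrow> z powr (-1/\<gamma>) * b powr (1/\<gamma>)) at_top)"
proof
  have e: "(\<lambda>z. measure M {\<omega>\<in>space M. X \<omega> * Y \<omega> > z}) = TT" unfolding TT_def[abs_def] ..
  show "regvar (-1/\<gamma>) (\<lambda>z. measure M {\<omega>\<in>space M. X \<omega> * Y \<omega> > z})"
    unfolding e regvar_def using TT_meas TT_pos TT_ratio by blast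
  show "\<forall>z>0. ((\<lambda>t. t * measure M {\<omega>\<in>space M. X \<omega> * Y \<omega> / a t > z})
                 \<longlongrightarrow> z powr (-1/\<gamma>) * b powr (1/\<gamma>)) at_top"
    using lim_XY by blast
qed

end

theorem theorem5p11:
  fixes M :: "'a measure" and X Y :: "'a \<Rightarrow> real"
    and \<rho> \<gamma> b :: real and \<alpha> a :: "real \<Rightarrow> real"
    and \<mu> :: "(ereal \<times> ereal) measure"
  assumes "prob_space M"
    and "\<rho> < 0" and "\<gamma> > 0"
    and "X \<in> borel_measurable M" and "Y \<in> borel_measurable M"
    and "\<forall>\<omega>\<in>space M. X \<omega> \<ge> 0" and "\<forall>\<omega>\<in>space M. Y \<omega> \<ge> 0"
    and "upper_endpoint M X b" and "b > 0"
    and "regvar \<rho> \<alpha>" and "regvar \<gamma> a"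
    and "\<forall>y>0. ((\<lambda>t. t * measure M {\<omega>\<in>space M. Y \<omega> / a t > y})
                 \<longlongrightarrow> y powr (-1/\<gamma>)) at_top"
    and "radon_on_E \<mu>" and "emeasure \<mu> Espace \<noteq> 0"
    and "vague_conv_E
           (\<lambda>t A. t * measure M {\<omega>\<in>space M.
                     (ereal ((b - X \<omega>) / \<alpha> t), ereal (Y \<omega> / a t)) \<in> A}) \<mu>"
    and "\<forall>y>0. nondeg_df (\<lambda>x. measure \<mu> ({0..ereal x} \<times> {ereal y<..\<infinity>}))
                         (measure \<mu> ({0..\<infinity>} \<times> {ereal y<..\<infinity>}))"
  shows "regvar (-1/\<gamma>) (\<lambda>z. measure M {\<omega>\<in>space M. X \<omega> * Y \<omega> > z}) \<and>
         (\<forall>z>0. ((\<lambda>t. t * measure M {\<omega>\<in>space M. X \<omega> * Y \<omega> / a t > z})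
                 \<longlongrightarrow> z powr (-1/\<gamma>) * b powr (1/\<gamma>)) at_top)"
  proof -
  interpret T511 M X Y \<rho> \<gamma> b \<alpha> a \<mu>
    using assms unfolding T511_def T511_axioms_def by blast
  show ?thesis by (rule main)
qed

end
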